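(* In the standing setting below, let $2\leq\ell\leq k-2$ and let $M_k$ be the set of $k$-cycles $(x_1,\dots,x_k)\in X_1\times\dots\times X_k$ such that $(x_1,\dots,x_\ell)$ is a bad $[\ell]$-tuple, $(x_1,\dots,x_{\ell-1})$ is not a bad $[\ell-1]$-tuple, and $(x_1,\dots,x_{\ell-1},x_k)$ is not a bad $([\ell-1]\cup\{k\})$-tuple. Then for every $(x_\ell,\dots,x_{k-1})\in X_\ell\times\dots\times X_{k-1}$ there are at most $\frac12\alpha^{\ell-1}N^{\ell-1}$ $k$-cycles in $M_k$ whose coordinates $\ell,\dots,k-1$ are $x_\ell,\dots,x_{k-1}$.
   Context: Let $p$ be a fixed prime, $n\geq1$, $N=p^n$, $[m]=\{1,\dots,m\}$. For sets $X_1,\dots,X_k\subseteq\mathbb{F}_p^n$, a $k$-cycle is a tuple $(x_1,\dots,x_k)\in X_1\times\dots\times X_k$ with $x_1+\dots+x_k=0$. Standing setting: $k\geq4$, $X_1,\dots,X_k\subseteq\mathbb{F}_p^n$, the number of $k$-cycles in $X_1\times\dots\times X_k$ equals $\delta'N^{k-1}$ with $\delta'>0$, and $\theta\geq 1$ is such that for each $i\in[k]$ every point of $X_i$ occurs as $x_i$ in at most $\theta\delta'N^{k-2}$ $k$-cycles. Put $\alpha=(\theta\delta')^{1/(k-2)}$. For $I\subseteq[k]$ with $1\leq|I|\leq k-2$, an $I$-tuple is an element $(x_i)_{i\in I}\in\prod_{i\in I}X_i$; it is called bad if there are at least $2\alpha^{k-|I|-1}N^{k-|I|-1}$ $k$-cycles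 $(x_1,\dots,x_k)\in X_1\times\dots\times X_k$ whose coordinates indexed by $I$ coincide with the given tuple. *)

theory Defs
  imports Complex_Main "HOL-Library.FuncSet" "HOL-Computational_Algebra.Primes"
begin

text \<open>Elements of F_p^n are represented as functions nat => nat with values in {0..<p}
  on coordinates 0..<n and 0 elsewhere; addition is coordinatewise mod p.\<close>

definition Fpn :: "nat \<Rightarrow> nat \<Rightarrow> (nat \<Rightarrow> nat) set" where
  "Fpn p n = {v. (\<forall>i<n. v i < p) \<and> (\<forall>i\<ge>n. v i = 0)}"

definition cycles :: "nat \<Rightarrow> nat \<Rightarrow> nat \<Rightarrow> (nat \<Rightarrow> (nat \<Rightarrow> nat) set) \<Rightarrow> (nat \<Rightarrow> (nat \<Rightarrow> nat)) set" where
  "cycles p n k X = {x \<in> PiE {1..k} X. \<forall>i<n. (\<Sum>j=1..k. x j i) mod p = 0}"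

definition bad :: "nat \<Rightarrow> nat \<Rightarrow> nat \<Rightarrow> (nat \<Rightarrow> (nat \<Rightarrow> nat) set) \<Rightarrow> real \<Rightarrow> nat set \<Rightarrow> (nat \<Rightarrow> (nat \<Rightarrow> nat)) \<Rightarrow> bool" where
  "bad p n k X \<alpha> I t \<longleftrightarrow> t \<in> PiE I X \<and>
     real (card {x \<in> cycles p n k X. \<forall>i\<in>I. x i = t i})
       \<ge> 2 * \<alpha> ^ (k - card I - 1) * (real p ^ n) ^ (k - card I - 1)"

end

theory Submission
  imports Defs
begin

lemma modc: assumes "(s + a) mod p = (s + b) mod (p::nat)" "a < p" "b < p" shows "a = b"
proof -
  have h: "a \<le> b \<Longrightarrow> (s + a) mod p = (s + b) mod p \<Longrightarrow> b < p \<Longrightarrow> a = b" for a b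
  proof -
    assume 1: "a \<le> b" "(s + a) mod p = (s + b) mod p" "b < p"
    hence "p dvd (s+b) - (s+a)" using mod_eq_dvd_iff_nat[of "s+a" "s+b" p] by simp
    hence "p dvd b - a" by simp
    moreover have "b - a < p" using 1 by simp
    ultimately show "a = b" using 1 by (metis diff_is_0_eq dvd_imp_le le_antisym not_less zero_less_diff)
  qed
  show ?thesis using h[of a b] h[of b a] assms by (metis nat_le_linear)
qed

lemma cycles_last_unique:
  assumes "x \<in> cycles p n k X" "x' \<in> cycles p n k X" "k \<ge> 1"
    and "X k \<subseteq> Fpn p n" and "\<forall>j\<in>{1..k-1}. x j = x' j"
  shows "x = x'"
proof -
  have xk: "x k = x' k"
  proof
    fix i
    have a: "x k \<in> Fpn p n" "x' k \<in> Fpn p n"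
      using assms unfolding cycles_def by (auto simp: PiE_def Pi_def)
    show "x k i = x' k i"
    proof (cases "i < n")
      case True
      have s: "(\<Sum>j=1..k. x j i) = (\<Sum>j=1..k-1. x j i) + x k i"
        "(\<Sum>j=1..k. x' j i) = (\<Sum>j=1..k-1. x' j i) + x' k i"
      proof -
        obtain m where m: "k = Suc m" using assms(3) by (cases k) auto
        show "(\<Sum>j=1..k. x j i) = (\<Sum>j=1..k-1. x j i) + x k i"
          "(\<Sum>j=1..k. x' j i) = (\<Sum>j=1..k-1. x' j i) + x' k i"
          unfolding m by (simp_all add: sum.cl_ivl_Suc)
      qed
      have e: "(\<Sum>j=1..k-1. x j i) = (\<Sum>j=1..k-1. x' j i)"
        using assms(5) by simp
      have "(\<Sum>j=1..k. x j i) mod p = 0" "(\<Sum>j=1..k. x' j i) mod p = 0"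
        using assms(1,2) True unfolding cycles_def by auto
      hence "((\<Sum>j=1..k-1. x j i) + x k i) mod p = ((\<Sum>j=1..k-1. x j i) + x' k i) mod p"
        using s e by simp
      moreover have "x k i < p" "x' k i < p" using a True unfolding Fpn_def by auto
      ultimately show ?thesis using modc by blast
    next
      case False
      then show ?thesis using a unfolding Fpn_def by auto
    qed
  qed
  show ?thesis
  proof
    fix j
    show "x j = x' j"
    proof (cases "j \<in> {1..k}")
      case True
      then show ?thesis using xk assms(5) by (cases "j = k") auto
    next
      case False
      then show ?thesis using assms(1,2) unfolding cycles_def by (auto simp: PiE_def extensional_def)
    qed
  qed
qed

theorem lemma8:
  fixes p n k l :: nat and X :: "nat \<Rightarrow> (nat \<Rightarrow> nat) set"
    and \<delta> \<theta> :: real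
  assumes "prime p" and "n \<ge> 1" and "k \<ge> 4"
    and "\<forall>i\<in>{1..k}. X i \<subseteq> Fpn p n"
    and "\<delta> > 0"
    and "real (card (cycles p n k X)) = \<delta> * (real p ^ n) ^ (k - 1)"
    and "\<theta> \<ge> 1"
    and "\<forall>i\<in>{1..k}. \<forall>a\<in>X i.
           real (card {x \<in> cycles p n k X. x i = a}) \<le> \<theta> * \<delta> * (real p ^ n) ^ (k - 2)"
    and "2 \<le> l" and "l \<le> k - 2"
  shows "\<forall>y \<in> PiE {l..k-1} X.
    real (card {x \<in> {x \<in> cycles p n k X.
             bad p n k X ((\<theta> * \<delta>) powr (1 / real (k - 2))) {1..l} (restrict x {1..l})
           \<and> \<not> bad p n k X ((\<theta> * \<delta>) powr (1 / real (k - 2))) {1..l-1} (restrict x {1..l-1})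
           \<and> \<not> bad p n k X ((\<theta> * \<delta>) powr (1 / real (k - 2))) ({1..l-1} \<union> {k}) (restrict x ({1..l-1} \<union> {k}))}.
         \<forall>i\<in>{l..k-1}. x i = y i})
    \<le> 1/2 * ((\<theta> * \<delta>) powr (1 / real (k - 2))) ^ (l - 1) * (real p ^ n) ^ (l - 1)"
proof
  fix y assume y: "y \<in> PiE {l..k-1} X"
  define \<alpha> where "\<alpha> = (\<theta> * \<delta>) powr (1 / real (k - 2))"
  define N where "N = real p ^ n"
  define C where "C = cycles p n k X"
  define S where "S = {x \<in> {x \<in> cycles p n k X.
             bad p n k X \<alpha> {1..l} (restrict x {1..l})
           \<and> \<not> bad p n k X \<alpha> {1..l-1} (restrict x {1..l-1})
           \<and> \<not> bad p n k X \<alpha> ({1..l-1} \<union> {k}) (restrict x ({1..l-1} \<union> {k}))}.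
         \<forall>i\<in>{l..k-1}. x i = y i}"
  have td: "\<theta> * \<delta> > 0" using assms(5,7) by simp
  have apos: "\<alpha> > 0" unfolding \<alpha>_def using assms(5,7) by simp
  have ak: "\<alpha> ^ (k-2) = \<theta> * \<delta>"
  proof -
    have "\<alpha> ^ (k-2) = (\<theta> * \<delta>) powr (real (k-2) * (1 / real (k - 2)))"
      unfolding \<alpha>_def using td assms(3,5,7) by (simp add: powr_realpow[symmetric] powr_powr mult.commute)
    also have "\<dots> = \<theta> * \<delta>" using assms(3) td by simp
    finally show ?thesis .
  qed
  have pp: "p > 0" using assms(1) prime_gt_0_nat by blast
  have Npos: "N > 0" unfolding N_def using pp by simp
  have "real (card C) > 0" unfolding C_def using assms(6) assms(5) Npos N_def by simp
  hence finC: "finite C" using card.infinite by fastforce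
  define B where "B = 2 * \<alpha> ^ (k - l - 1) * N ^ (k - l - 1)"
  have Bpos: "B > 0" unfolding B_def using apos Npos by simp
  define E where "E x = {z \<in> C. \<forall>i\<in>{1..l}. z i = x i}" for x
  define D where "D = {z \<in> C. z l = y l}"
  have lin: "l \<in> {l..k-1}" using assms by auto
  have SC: "S \<subseteq> C" unfolding S_def C_def by auto
  have finS: "finite S" using finC SC finite_subset by blast
  have cardE: "real (card (E x)) \<ge> B" if "x \<in> S" for x
  proof -
    have "bad p n k X \<alpha> {1..l} (restrict x {1..l})" using that unfolding S_def by auto
    hence "real (card {z \<in> C. \<forall>i\<in>{1..l}. z i = restrict x {1..l} i}) \<ge> B"
      unfolding bad_def B_def C_def N_def by simp
    moreover have "{z \<in> C. \<forall>i\<in>{1..l}. z i = restrict x {1..l} i} = E x"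
      unfolding E_def by auto
    ultimately show ?thesis by simp
  qed
  have ED: "E x \<subseteq> D" if "x \<in> S" for x
  proof -
    have "x l = y l" using that lin unfolding S_def by auto
    moreover have "l \<in> {1..l}" using assms by auto
    ultimately show ?thesis unfolding E_def D_def by auto
  qed
  have disj: "E x \<inter> E x' = {}" if "x \<in> S" "x' \<in> S" "x \<noteq> x'" for x x'
  proof (rule ccontr)
    assume "E x \<inter> E x' \<noteq> {}"
    then obtain z where z: "z \<in> E x" "z \<in> E x'" by blast
    have "\<forall>j\<in>{1..k-1}. x j = x' j"
    proof
      fix j assume j: "j \<in> {1..k-1}"
      show "x j = x' j"
      proof (cases "j \<le> l")
        case True
        then show ?thesis using z j unfolding E_def by auto
      next
        case False
        then have "j \<in> {l..k-1}" using j by auto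
        then show ?thesis using that unfolding S_def by auto
      qed
    qed
    moreover have "x \<in> cycles p n k X" "x' \<in> cycles p n k X" using that SC C_def by auto
    ultimately have "x = x'" using cycles_last_unique[of x p n k X x'] assms(3,4) by auto
    thus False using that by simp
  qed
  have finE: "finite (E x)" for x unfolding E_def using finC by simp
  have "real (card S) * B = (\<Sum>x\<in>S. B)" by simp
  also have "\<dots> \<le> (\<Sum>x\<in>S. real (card (E x)))" using cardE by (intro sum_mono) auto
  also have "\<dots> = real (card (\<Union>x\<in>S. E x))"
    using card_UN_disjoint[OF finS, of E] finE disj by simp
  also have "\<dots> \<le> real (card D)"
  proof -
    have "(\<Union>x\<in>S. E x) \<subseteq> D" using ED by blast
    moreover have "finite D" unfolding D_def using finC by simp
    ultimately show ?thesis by (simp add: card_mono)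
  qed
  also have "\<dots> \<le> \<theta> * \<delta> * N ^ (k - 2)"
  proof -
    have "y l \<in> X l" using y lin by (auto simp: PiE_def Pi_def)
    moreover have "l \<in> {1..k}" using assms by auto
    ultimately show ?thesis using assms(8) unfolding D_def C_def N_def by blast
  qed
  also have "\<dots> = B * (1/2 * \<alpha> ^ (l - 1) * N ^ (l - 1))"
  proof -
    have e: "k - 2 = (k - l - 1) + (l - 1)" using assms by auto
    show ?thesis unfolding B_def ak[symmetric] e power_add by simp
  qed
  finally have "real (card S) \<le> 1/2 * \<alpha> ^ (l - 1) * N ^ (l - 1)"
    using Bpos by (simp add: mult.commute)
  thus "real (card {x \<in> {x \<in> cycles p n k X.
             bad p n k X ((\<theta> * \<delta>) powr (1 / real (k - 2))) {1..l} (restrict x {1..l})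
           \<and> \<not> bad p n k X ((\<theta> * \<delta>) powr (1 / real (k - 2))) {1..l-1} (restrict x {1..l-1})
           \<and> \<not> bad p n k X ((\<theta> * \<delta>) powr (1 / real (k - 2))) ({1..l-1} \<union> {k}) (restrict x ({1..l-1} \<union> {k}))}.
         \<forall>i\<in>{l..k-1}. x i = y i})
    \<le> 1/2 * ((\<theta> * \<delta>) powr (1 / real (k - 2))) ^ (l - 1) * (real p ^ n) ^ (l - 1)"
    unfolding S_def \<alpha>_def N_def by simp
qed

end
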